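(* Let $N\ge2$ and $0=x_0<x_1<\dots<x_N=1$, $I=[0,1]$, $I_i=[x_{i-1},x_i]$, $|I_i|=x_i-x_{i-1}$, $L_i(x)=x_{i-1}+|I_i|x$ for $i=1,\dots,N$. Let $\alpha_i,\beta_i,\gamma_i$ be reals with $|\alpha_i|<1$ and $|\beta_i|+|\gamma_i|<1$, let $p_i\in\mathrm{Lip}\,\lambda_i$ and $q_i\in\mathrm{Lip}\,\mu_i$ with $0<\lambda_i,\mu_i\le1$, and let $f_1,f_2:I\to\mathbb{R}$ be continuous with $f_1(L_i(x))=\alpha_if_1(x)+\beta_if_2(x)+p_i(x)$ and $f_2(L_i(x))=\gamma_if_2(x)+q_i(x)$ for all $x\in I$, $i=1,\dots,N$. Put $\lambda=\min_i\lambda_i$, $\mu=\min_i\mu_i$, $\Omega=\max_i |\alpha_i|/|I_i|^{\lambda}$, $\Gamma=\max_i|\gamma_i|/|I_i|^{\mu}$, $\Theta=\max_i|\alpha_i|/|I_i|^{\mu}$, and suppose $\Theta<1$. Then: (a) if $\Omega\ne1$ and $\Gamma\ne1$, there is $\delta\in(0,1]$ with $f_1\in\mathrm{Lip}\,\delta$; (b) if $\Omega=1$ or $\Gamma=1$, there is $\delta\in(0,1]$ with $\omega(f_1,t)=O(|t|^{\delta}\log|t|)$ as $t\to0$.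
   Context: $\mathrm{Lip}\,\delta$ denotes the class of functions $g$ on $I$ such that $|g(x)-g(y)|\le C|x-y|^{\delta}$ for some constant $C$ and all $x,y\in I$. $\omega(f_1,t)=\sup\{|f_1(x)-f_1(y)|: x,y\in I,\ |x-y|\le |t|\}$ is the modulus of continuity. The function $f_1$ is the coalescence hidden variable fractal interpolation function (CHFIF): $(f_1,f_2)$ is the continuous function whose graph is the attractor of the IFS $\omega_i(x,y,z)=(L_i(x),\alpha_iy+\beta_iz+p_i(x),\gamma_iz+q_i(x))$. *)

theory Defs
  imports "HOL-Analysis.Analysis" "HOL-Library.Landau_Symbols"
begin

definition Lip_on_I :: "real \<Rightarrow> (real \<Rightarrow> real) \<Rightarrow> bool" where
  "Lip_on_I \<delta> g \<longleftrightarrow> (\<exists>C. \<forall>x\<in>{0..1}. \<forall>y\<in>{0..1}. \<bar>g x - g y\<bar> \<le> C * \<bar>x - y\<bar> powr \<delta>)"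

definition modcont :: "(real \<Rightarrow> real) \<Rightarrow> real \<Rightarrow> real" where
  "modcont f t = Sup {\<bar>f x - f y\<bar> | x y. x \<in> {0..1} \<and> y \<in> {0..1} \<and> \<bar>x - y\<bar> \<le> \<bar>t\<bar>}"

end

theory Submission
  imports Defs
begin


lemma powr_ge_self:
  fixes t d :: real
  assumes "0 \<le> t" "t \<le> 1" "0 < d" "d \<le> 1"
  shows "t \<le> t powr d"
proof (cases "t = 0")
  case True then show ?thesis by simp
next
  case False
  then have "t powr 1 \<le> t powr d" using assms by (intro powr_mono') auto
  then show ?thesis using False assms by simp
qed

lemma choose_delta:
  fixes a :: "nat \<Rightarrow> real" and A :: "nat set"
  assumes fin: "finite A" and a1: "\<And>i. i \<in> A \<Longrightarrow> \<bar>a i\<bar> < 1"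
    and r0: "0 < rmin" and r1: "rmin < 1" and d0: "0 < d0"
  shows "\<exists>d s. 0 < d \<and> d \<le> d0 \<and> 0 \<le> s \<and> s < 1 \<and>
           (\<forall>i\<in>A. \<forall>r. rmin \<le> r \<longrightarrow> \<bar>a i\<bar> \<le> s * r powr d)"
proof -
  define amax where "amax = Max (insert 0 ((\<lambda>i. \<bar>a i\<bar>) ` A))"
  have fin2: "finite (insert 0 ((\<lambda>i. \<bar>a i\<bar>) ` A))" using fin by simp
  have am0: "0 \<le> amax" unfolding amax_def using fin2 by (intro Max_ge) auto
  have am1: "amax < 1" unfolding amax_def using fin2 a1 by (subst Max_less_iff) auto
  have ai: "\<bar>a i\<bar> \<le> amax" if "i \<in> A" for i
    unfolding amax_def using fin2 that by (intro Max_ge) auto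
  define c where "c = (1 + amax) / 2"
  have c0: "0 < c" "c < 1" "amax < c" using am0 am1 unfolding c_def by auto
  define s where "s = amax / c"
  define d where "d = min d0 (ln c / ln rmin)"
  have lc: "ln c < 0" using c0 by simp
  have lr: "ln rmin < 0" using r0 r1 by simp
  have dpos: "0 < d" unfolding d_def using d0 lc lr by (simp add: divide_neg_neg)
  have "d \<le> ln c / ln rmin" unfolding d_def by simp
  then have "d * ln rmin \<ge> ln c / ln rmin * ln rmin"
    using lr by (intro mult_right_mono_neg) auto
  then have dl: "d * ln rmin \<ge> ln c" using lr by simp
  have rc: "rmin powr d \<ge> c"
  proof -
    have "rmin powr d = exp (d * ln rmin)" using r0 by (simp add: powr_def mult.commute)
    also have "\<dots> \<ge> exp (ln c)" using dl by simp
    finally show ?thesis using c0 by simp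
  qed
  have s0: "0 \<le> s" "s < 1" unfolding s_def using c0 am0 by (auto simp: divide_simps)
  have main: "\<forall>i\<in>A. \<forall>r. rmin \<le> r \<longrightarrow> \<bar>a i\<bar> \<le> s * r powr d"
  proof (intro ballI allI impI)
    fix i r assume i: "i \<in> A" and rr: "rmin \<le> r"
    have "r powr d \<ge> rmin powr d" using rr r0 dpos by (intro powr_mono2) auto
    then have "s * r powr d \<ge> s * c" using rc s0 by (intro mult_left_mono) auto
    moreover have "s * c = amax" unfolding s_def using c0 by simp
    ultimately show "\<bar>a i\<bar> \<le> s * r powr d" using ai[OF i] by simp
  qed
  have "d \<le> d0" unfolding d_def by simp
  then show ?thesis using dpos s0 main by blast
qed

lemma lip_mono:
  assumes "Lip_on_I d g" "0 < e" "e \<le> d"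
  shows "\<exists>K\<ge>0. \<forall>u\<in>{0..1}. \<forall>v\<in>{0..1}. \<bar>g u - g v\<bar> \<le> K * \<bar>u - v\<bar> powr e"
proof -
  obtain C where C: "\<forall>u\<in>{0..1}. \<forall>v\<in>{0..1}. \<bar>g u - g v\<bar> \<le> C * \<bar>u - v\<bar> powr d"
    using assms(1) unfolding Lip_on_I_def by blast
  show ?thesis
  proof (intro exI[of _ "max C 0"] conjI ballI)
    fix u v :: real assume u: "u \<in> {0..1}" and v: "v \<in> {0..1}"
    have h: "\<bar>u - v\<bar> \<le> 1" using u v by auto
    have "\<bar>g u - g v\<bar> \<le> C * \<bar>u - v\<bar> powr d" using C u v by blast
    also have "\<dots> \<le> max C 0 * \<bar>u - v\<bar> powr d" by (intro mult_right_mono) auto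
    also have "\<dots> \<le> max C 0 * \<bar>u - v\<bar> powr e"
      using h assms by (intro mult_left_mono powr_mono') auto
    finally show "\<bar>g u - g v\<bar> \<le> max C 0 * \<bar>u - v\<bar> powr e" .
  qed simp
qed

lemma common_const:
  fixes A :: "nat set" and g :: "nat \<Rightarrow> real \<Rightarrow> real"
  assumes "finite A"
    and "\<And>i. i \<in> A \<Longrightarrow> \<exists>K\<ge>0. \<forall>u\<in>{0..1}. \<forall>v\<in>{0..1}. \<bar>g i u - g i v\<bar> \<le> K * \<bar>u - v\<bar> powr e"
  shows "\<exists>K\<ge>0. \<forall>i\<in>A. \<forall>u\<in>{0..1}. \<forall>v\<in>{0..1}. \<bar>g i u - g i v\<bar> \<le> K * \<bar>u - v\<bar> powr e"
proof -
  obtain Kf :: "nat \<Rightarrow> real" where Kf: "\<forall>i\<in>A. Kf i \<ge> 0 \<and> (\<forall>u\<in>{0..1}. \<forall>v\<in>{0..1}. \<bar>g i u - g i v\<bar> \<le> Kf i * \<bar>u - v\<bar> powr e)"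
    using assms(2) by metis
  show ?thesis
  proof (intro exI[of _ "sum Kf A"] conjI ballI)
    show "0 \<le> sum Kf A" using Kf by (simp add: sum_nonneg)
    fix i u v assume i: "i \<in> A" and u: "u \<in> {0..1::real}" and v: "v \<in> {0..1::real}"
    have "Kf i \<le> sum Kf A" using Kf i assms(1) by (intro member_le_sum) auto
    then have "Kf i * \<bar>u - v\<bar> powr e \<le> sum Kf A * \<bar>u - v\<bar> powr e" by (intro mult_right_mono) auto
    then show "\<bar>g i u - g i v\<bar> \<le> sum Kf A * \<bar>u - v\<bar> powr e" using Kf i u v by force
  qed
qed

lemma holder_modcont:
  assumes d: "0 < d" and C: "\<forall>u\<in>{0..1}. \<forall>v\<in>{0..1}. \<bar>f u - f v\<bar> \<le> C * \<bar>u - v\<bar> powr d"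
  shows "modcont f \<in> O[at 0](\<lambda>t. \<bar>t\<bar> powr d * ln \<bar>t\<bar>)"
proof -
  define C' where "C' = max C 0"
  have C'0: "0 \<le> C'" unfolding C'_def by simp
  have key: "norm (modcont f t) \<le> C' * norm (\<bar>t\<bar> powr d * ln \<bar>t\<bar>)"
    if t: "t \<noteq> 0" "\<bar>t\<bar> < exp (-1)" for t :: real
  proof -
    define S where "S = {\<bar>f x - f y\<bar> | x y. x \<in> {0..1} \<and> y \<in> {0..1} \<and> \<bar>x - y\<bar> \<le> \<bar>t\<bar>}"
    have ms: "modcont f t = Sup S" unfolding modcont_def S_def by simp
    have S0: "0 \<in> S" unfolding S_def by (rule CollectI, rule exI[of _ 0], rule exI[of _ 0]) auto
    have Sb: "z \<le> C' * \<bar>t\<bar> powr d" if zS: "z \<in> S" for z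
    proof -
      obtain x y where xy: "z = \<bar>f x - f y\<bar>" "x \<in> {0..1}" "y \<in> {0..1}" "\<bar>x - y\<bar> \<le> \<bar>t\<bar>"
        using zS unfolding S_def by blast
      have "z \<le> C * \<bar>x - y\<bar> powr d" using C xy by blast
      also have "\<dots> \<le> C' * \<bar>x - y\<bar> powr d" unfolding C'_def by (intro mult_right_mono) auto
      also have "\<dots> \<le> C' * \<bar>t\<bar> powr d" using xy d C'0 by (intro mult_left_mono powr_mono2) auto
      finally show ?thesis .
    qed
    have bdd: "bdd_above S" using Sb by (intro bdd_aboveI) blast
    have up: "Sup S \<le> C' * \<bar>t\<bar> powr d" using S0 Sb by (intro cSup_least) auto
    have lo: "0 \<le> Sup S" using S0 bdd by (intro cSup_upper) auto
    have "ln \<bar>t\<bar> < ln (exp (-1))" using t by (subst ln_less_cancel_iff) auto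
    then have l1: "1 \<le> \<bar>ln \<bar>t\<bar>\<bar>" by simp
    have "norm (modcont f t) = Sup S" using ms lo by simp
    also have "\<dots> \<le> C' * \<bar>t\<bar> powr d" by (rule up)
    also have "\<dots> \<le> C' * (\<bar>t\<bar> powr d * \<bar>ln \<bar>t\<bar>\<bar>)"
      using l1 C'0 by (intro mult_left_mono) (auto intro: mult_le_cancel_left1[THEN iffD2])
    also have "\<dots> = C' * norm (\<bar>t\<bar> powr d * ln \<bar>t\<bar>)" by (simp add: abs_mult)
    finally show ?thesis .
  qed
  have "eventually (\<lambda>t. norm (modcont f t) \<le> C' * norm (\<bar>t\<bar> powr d * ln \<bar>t\<bar>)) (at 0)"
    unfolding eventually_at using key by (intro exI[of _ "exp (-1)"]) (auto simp: dist_real_def)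
  then show ?thesis by (rule bigoI)
qed


lemma step_bound:
  fixes a A B G1 G2 :: real
  shows "\<bar>(a * A + G1) - (a * B + G2)\<bar> \<le> \<bar>a\<bar> * \<bar>A - B\<bar> + \<bar>G1 - G2\<bar>"
proof -
  have "(a * A + G1) - (a * B + G2) = a * (A - B) + (G1 - G2)" by (simp add: algebra_simps)
  then show ?thesis by (metis abs_mult abs_triangle_ineq)
qed

lemma holder_general:
  fixes N :: nat and x a :: "nat \<Rightarrow> real" and g :: "nat \<Rightarrow> real \<Rightarrow> real" and f :: "real \<Rightarrow> real"
    and rmin rmax d s K B :: real
  assumes N1: "N \<ge> 1" and x0: "x 0 = 0" and xN: "x N = 1"
    and rmin: "0 < rmin" "\<And>i. i \<in> {1..N} \<Longrightarrow> rmin \<le> x i - x (i - 1)"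
    and rmax: "rmax < 1" "\<And>i. i \<in> {1..N} \<Longrightarrow> x i - x (i - 1) \<le> rmax"
    and d: "0 < d" "d \<le> 1" and s: "0 \<le> s" "s < 1"
    and a: "\<And>i. i \<in> {1..N} \<Longrightarrow> \<bar>a i\<bar> \<le> s * (x i - x (i - 1)) powr d"
    and K: "0 \<le> K"
    and g: "\<And>i u v. i \<in> {1..N} \<Longrightarrow> u \<in> {0..1} \<Longrightarrow> v \<in> {0..1} \<Longrightarrow> \<bar>g i u - g i v\<bar> \<le> K * \<bar>u - v\<bar> powr d"
    and B: "\<And>u. u \<in> {0..1} \<Longrightarrow> \<bar>f u\<bar> \<le> B"
    and eq: "\<And>i y. i \<in> {1..N} \<Longrightarrow> y \<in> {0..1} \<Longrightarrow> f (x (i - 1) + (x i - x (i - 1)) * y) = a i * f y + g i y"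
  shows "\<exists>C. \<forall>u\<in>{0..1}. \<forall>v\<in>{0..1}. \<bar>f u - f v\<bar> \<le> C * \<bar>u - v\<bar> powr d"
proof -
  define r where "r i = x i - x (i - 1)" for i
  have rpos: "0 < r i" if "i \<in> {1..N}" for i using rmin that unfolding r_def by force
  have mono: "x i \<le> x j" if "i \<le> j" "j \<le> N" for i j
    using that
  proof (induction j)
    case 0 then show ?case by simp
  next
    case (Suc j)
    show ?case
    proof (cases "i = Suc j")
      case True then show ?thesis by simp
    next
      case False
      then have "x i \<le> x j" using Suc by simp
      moreover have "x j < x (Suc j)" using rpos[of "Suc j"] Suc unfolding r_def by simp
      ultimately show ?thesis by simp
    qed
  qed
  have xI: "0 \<le> x i \<and> x i \<le> 1" if "i \<le> N" for i
    using mono[of 0 i] mono[of i N] that x0 xN by simp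
  have r1: "r i \<le> 1" if "i \<in> {1..N}" for i
  proof -
    have "i - 1 \<le> N" "i \<le> N" using that by auto
    then show ?thesis using xI[of i] xI[of "i - 1"] unfolding r_def by auto
  qed
  have rmin1: "rmin \<le> 1" using rmin(2)[of 1] r1[of 1] N1 unfolding r_def by auto
  have B0: "0 \<le> B" using B[of 0] by simp
  have rpow: "rmin \<le> r i powr d" if "i \<in> {1..N}" for i
    using powr_ge_self[of "r i" d] rpos[OF that] r1[OF that] d rmin(2)[OF that] unfolding r_def by force
  have rpowpos: "0 < r i powr d" if "i \<in> {1..N}" for i using rpos[OF that] by simp
  have aabs: "\<bar>a i\<bar> \<le> 1" if "i \<in> {1..N}" for i
  proof -
    have "r i powr d \<le> 1" using rpos[OF that] r1[OF that] d by (intro powr_le1) auto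
    then have "s * r i powr d \<le> 1 * 1" using s by (intro mult_mono) auto
    then show ?thesis using a[OF that] unfolding r_def by simp
  qed
  have far: "\<bar>f u - f v\<bar> \<le> 2 * B" if "u \<in> {0..1}" "v \<in> {0..1}" for u v
    using B[OF that(1)] B[OF that(2)] by linarith
  have div_leM: "M * (t powr d / r i powr d) \<le> M / rmin * t powr d" if "i \<in> {1..N}" "0 \<le> t" "0 \<le> M" for i t M
  proof -
    have "M * (t powr d / r i powr d) = M * t powr d / r i powr d" by simp
    also have "\<dots> \<le> M * t powr d / rmin"
      using rpow[OF that(1)] rmin(1) that(3) rpowpos[OF that(1)] by (intro divide_left_mono) auto
    finally show ?thesis by simp
  qed
  define E where "E = (2 * B + K) / (rmin * (1 - s))"
  have E0: "0 \<le> E" unfolding E_def using B0 K rmin s by auto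
  have E1: "2 * B \<le> E * rmin"
  proof -
    have "E * rmin = (2 * B + K) / (1 - s)" unfolding E_def using rmin s by (simp add: field_simps)
    also have "\<dots> \<ge> (2 * B + K)"
    proof -
      have "(2 * B + K) * (1 - s) \<le> (2 * B + K) * 1" using B0 K s by (intro mult_left_mono) auto
      then show ?thesis using s by (simp add: le_divide_eq)
    qed
    finally show ?thesis using K by linarith
  qed
  have E2: "s * E + K / rmin \<le> E"
  proof -
    have "E * (1 - s) = (2 * B + K) / rmin" unfolding E_def using rmin s by (simp add: field_simps)
    also have "\<dots> \<ge> K / rmin" using B0 rmin by (intro divide_right_mono) auto
    finally show ?thesis by (simp add: algebra_simps)
  qed
  have farE: "\<bar>f u - f v\<bar> \<le> E * t powr d" if "u \<in> {0..1}" "v \<in> {0..1}" "rmin \<le> t" "t \<le> 1" for u v t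
  proof -
    have "t \<le> t powr d" using powr_ge_self[of t d] that rmin d by auto
    then have "E * rmin \<le> E * t powr d" using that E0 by (intro mult_left_mono) auto
    then show ?thesis using far[OF that(1,2)] E1 by linarith
  qed
  have ep0n: "\<bar>f t - f 0\<bar> \<le> E * t powr d" if "t \<in> {0..1}" "x 1 ^ n \<le> t" for n t
    using that
  proof (induction n arbitrary: t)
    case 0
    then show ?case using farE[of t 0 t] rmin1 by auto
  next
    case (Suc n)
    show ?case
    proof (cases "rmin \<le> t")
      case True then show ?thesis using farE[of t 0 t] Suc.prems by auto
    next
      case False
      have i1: "(1::nat) \<in> {1..N}" using N1 by simp
      have r1x: "r 1 = x 1" unfolding r_def using x0 by simp
      have "t < x 1" using False rmin(2)[OF i1] x0 by simp
      define u where "u = t / x 1"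
      have x1p: "0 < x 1" using rpos[OF i1] r1x by simp
      have u01: "u \<in> {0..1}" unfolding u_def using Suc.prems `t < x 1` x1p by auto
      have un: "x 1 ^ n \<le> u" unfolding u_def using Suc.prems x1p by (simp add: le_divide_eq mult.commute)
      have IH: "\<bar>f u - f 0\<bar> \<le> E * u powr d" using Suc.IH[OF u01 un] .
      have ft: "f t = a 1 * f u + g 1 u" using eq[OF i1 u01] x0 x1p unfolding u_def by simp
      have f0: "f 0 = a 1 * f 0 + g 1 0" using eq[OF i1, of 0] x0 by simp
      have up: "u powr d = t powr d / r 1 powr d" unfolding u_def r1x using Suc.prems x1p
        by (simp add: powr_divide)
      have "\<bar>f t - f 0\<bar> \<le> \<bar>a 1\<bar> * \<bar>f u - f 0\<bar> + \<bar>g 1 u - g 1 0\<bar>"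
        unfolding ft by (subst f0) (rule step_bound)
      also have "\<dots> \<le> (s * r 1 powr d) * (E * u powr d) + K * u powr d"
        using a[OF i1] IH g[OF i1 u01, of 0] E0 u01 unfolding r_def
        by (intro add_mono mult_mono) auto
      also have "\<dots> = s * E * t powr d + K * (t powr d / r 1 powr d)"
        unfolding up using rpowpos[OF i1] by simp
      also have "\<dots> \<le> s * E * t powr d + K / rmin * t powr d"
        using div_leM[OF i1, of t K] K Suc.prems by simp
      also have "\<dots> = (s * E + K / rmin) * t powr d" by (simp add: algebra_simps)
      also have "\<dots> \<le> E * t powr d" using E2 by (intro mult_right_mono) auto
      finally show ?thesis .
    qed
  qed
  have ep0: "\<bar>f t - f 0\<bar> \<le> E * t powr d" if t01: "t \<in> {0..1}" for t
  proof (cases "t = 0")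
    case True then show ?thesis by simp
  next
    case False
    have "x 1 < 1" using rmax(1) rmax(2)[of 1] N1 x0 by auto
    then obtain n where "x 1 ^ n < t" using real_arch_pow_inv[of t "x 1"] False t01 by auto
    then show ?thesis using ep0n[OF t01, of n] by simp
  qed
  have iN: "N \<in> {1..N}" using N1 by simp
  have rN: "r N = 1 - x (N - 1)" unfolding r_def using xN by simp
  have ep1n: "\<bar>f t - f 1\<bar> \<le> E * (1 - t) powr d" if "t \<in> {0..1}" "r N ^ n \<le> 1 - t" for n t
    using that
  proof (induction n arbitrary: t)
    case 0
    then show ?case using farE[of t 1 "1 - t"] rmin1 by auto
  next
    case (Suc n)
    show ?case
    proof (cases "rmin \<le> 1 - t")
      case True then show ?thesis using farE[of t 1 "1 - t"] Suc.prems by auto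
    next
      case False
      have rNp: "0 < r N" using rpos[OF iN] .
      have "x (N - 1) < t" using False rmin(2)[OF iN] rN unfolding r_def by simp
      define u where "u = (t - x (N - 1)) / r N"
      have u01: "u \<in> {0..1}" unfolding u_def using Suc.prems `x (N - 1) < t` rNp rN by auto
      have omu: "1 - u = (1 - t) / r N" unfolding u_def using rNp rN by (simp add: field_simps)
      have un: "r N ^ n \<le> 1 - u" unfolding omu using Suc.prems rNp by (simp add: le_divide_eq mult.commute)
      have IH: "\<bar>f u - f 1\<bar> \<le> E * (1 - u) powr d" using Suc.IH[OF u01 un] .
      have ft: "f t = a N * f u + g N u" using eq[OF iN u01] rNp unfolding u_def r_def by simp
      have f1: "f 1 = a N * f 1 + g N 1" using eq[OF iN, of 1] xN by simp
      have up: "(1 - u) powr d = (1 - t) powr d / r N powr d" unfolding omu using Suc.prems rNp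
        by (simp add: powr_divide)
      have "\<bar>f t - f 1\<bar> \<le> \<bar>a N\<bar> * \<bar>f u - f 1\<bar> + \<bar>g N u - g N 1\<bar>"
        unfolding ft by (subst f1) (rule step_bound)
      also have "\<dots> \<le> (s * r N powr d) * (E * (1 - u) powr d) + K * (1 - u) powr d"
        using a[OF iN] IH g[OF iN u01, of 1] E0 u01 unfolding r_def
        by (intro add_mono mult_mono) (auto simp: abs_minus_commute)
      also have "\<dots> = s * E * (1 - t) powr d + K * ((1 - t) powr d / r N powr d)"
        unfolding up using rpowpos[OF iN] by simp
      also have "\<dots> \<le> s * E * (1 - t) powr d + K / rmin * (1 - t) powr d"
        using div_leM[OF iN, of "1 - t" K] K Suc.prems by simp
      also have "\<dots> = (s * E + K / rmin) * (1 - t) powr d" by (simp add: algebra_simps)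
      also have "\<dots> \<le> E * (1 - t) powr d" using E2 by (intro mult_right_mono) auto
      finally show ?thesis .
    qed
  qed
  have ep1: "\<bar>f t - f 1\<bar> \<le> E * (1 - t) powr d" if t01: "t \<in> {0..1}" for t
  proof (cases "t = 1")
    case True then show ?thesis by simp
  next
    case False
    have "r N < 1" using rmax(1) rmax(2)[OF iN] unfolding r_def by auto
    then obtain n where "r N ^ n < 1 - t" using real_arch_pow_inv[of "1 - t" "r N"] False t01 by auto
    then show ?thesis using ep1n[OF t01, of n] by simp
  qed
  have side: "\<bar>f w - f (x i)\<bar> \<le> (E + K) / rmin * (x i - w) powr d \<and>
              \<bar>f w - f (x (i - 1))\<bar> \<le> (E + K) / rmin * (w - x (i - 1)) powr d"
    if i: "i \<in> {1..N}" and w: "x (i - 1) \<le> w" "w \<le> x i" for i w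
  proof -
    have rp: "0 < r i" using rpos[OF i] .
    define w' where "w' = (w - x (i - 1)) / r i"
    have w01: "w' \<in> {0..1}" unfolding w'_def using w rp unfolding r_def by auto
    have fw: "f w = a i * f w' + g i w'" using eq[OF i w01] rp unfolding w'_def r_def by simp
    have fxi: "f (x i) = a i * f 1 + g i 1" using eq[OF i, of 1] by simp
    have fxi1: "f (x (i - 1)) = a i * f 0 + g i 0" using eq[OF i, of 0] by simp
    have omw: "1 - w' = (x i - w) / r i" unfolding w'_def using rp unfolding r_def by (simp add: field_simps)
    have wp: "w' powr d = (w - x (i - 1)) powr d / r i powr d" unfolding w'_def using w rp
      by (simp add: powr_divide)
    have omwp: "(1 - w') powr d = (x i - w) powr d / r i powr d" unfolding omw using w rp
      by (simp add: powr_divide)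
    have EK: "0 \<le> E + K" using E0 K by simp
    have "\<bar>f w - f (x i)\<bar> \<le> \<bar>a i\<bar> * \<bar>f w' - f 1\<bar> + \<bar>g i w' - g i 1\<bar>"
      unfolding fw fxi by (rule step_bound)
    also have "\<dots> \<le> 1 * (E * (1 - w') powr d) + K * (1 - w') powr d"
      using aabs[OF i] ep1[OF w01] g[OF i w01, of 1] w01
      by (intro add_mono mult_mono) (auto simp: abs_minus_commute)
    also have "\<dots> = (E + K) * ((x i - w) powr d / r i powr d)" unfolding omwp by (simp add: algebra_simps add_divide_distrib)
    also have "\<dots> \<le> (E + K) / rmin * (x i - w) powr d" using div_leM[OF i _ EK, of "x i - w"] w by simp
    finally have A: "\<bar>f w - f (x i)\<bar> \<le> (E + K) / rmin * (x i - w) powr d" .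
    have "\<bar>f w - f (x (i - 1))\<bar> \<le> \<bar>a i\<bar> * \<bar>f w' - f 0\<bar> + \<bar>g i w' - g i 0\<bar>"
      unfolding fw fxi1 by (rule step_bound)
    also have "\<dots> \<le> 1 * (E * w' powr d) + K * w' powr d"
      using aabs[OF i] ep0[OF w01] g[OF i w01, of 0] w01
      by (intro add_mono mult_mono) auto
    also have "\<dots> = (E + K) * ((w - x (i - 1)) powr d / r i powr d)" unfolding wp by (simp add: algebra_simps add_divide_distrib)
    also have "\<dots> \<le> (E + K) / rmin * (w - x (i - 1)) powr d" using div_leM[OF i _ EK, of "w - x (i - 1)"] w by simp
    finally show ?thesis using A by simp
  qed
  define C where "C = (2 * B + 2 * E + 2 * K) / (rmin * (1 - s))"
  have Cq: "C * rmin * (1 - s) = 2 * B + 2 * E + 2 * K" unfolding C_def using rmin s by (simp add: field_simps)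
  have C0: "0 \<le> C" unfolding C_def using B0 E0 K rmin s by auto
  have C1: "2 * B \<le> C * rmin"
  proof -
    have "C * rmin * (1 - s) \<le> C * rmin * 1" using C0 rmin s by (intro mult_left_mono) auto
    then show ?thesis using Cq E0 K by simp
  qed
  have C2: "s * C + K / rmin \<le> C"
  proof -
    have "K \<le> C * rmin * (1 - s)" using Cq B0 E0 K by simp
    then have "K / rmin \<le> C * rmin * (1 - s) / rmin" using rmin(1) by (intro divide_right_mono) auto
    also have "\<dots> = C * (1 - s)" using rmin(1) by simp
    finally show ?thesis by (simp add: algebra_simps)
  qed
  have C3: "2 * ((E + K) / rmin) \<le> C"
  proof -
    have "C * rmin * (1 - s) \<le> C * rmin * 1" using C0 rmin s by (intro mult_left_mono) auto
    then have "2 * (E + K) \<le> C * rmin" using Cq B0 by simp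
    then have "2 * (E + K) / rmin \<le> C * rmin / rmin" using rmin(1) by (intro divide_right_mono) auto
    then show ?thesis using rmin(1) by simp
  qed
  have farC: "\<bar>f u - f v\<bar> \<le> C * (v - u) powr d" if "u \<in> {0..1}" "v \<in> {0..1}" "rmin \<le> v - u" for u v
  proof -
    have "v - u \<le> (v - u) powr d" using powr_ge_self[of "v - u" d] that rmin d by auto
    then have "C * rmin \<le> C * (v - u) powr d" using that C0 by (intro mult_left_mono) auto
    then show ?thesis using far[OF that(1,2)] C1 by linarith
  qed
  have rmaxp: "0 < rmax" using rmax(2)[OF iN] rpos[OF iN] unfolding r_def by simp
  have main: "\<bar>f u - f v\<bar> \<le> C * (v - u) powr d"
    if "u \<in> {0..1}" "v \<in> {0..1}" "u < v" "rmax ^ n \<le> v - u" for n u v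
    using that
  proof (induction n arbitrary: u v)
    case 0
    then show ?case using farC rmin1 by auto
  next
    case (Suc n)
    show ?case
    proof (cases "rmin \<le> v - u")
      case True then show ?thesis using farC Suc.prems by auto
    next
      case False
      have "u < x N" using Suc.prems xN by auto
      then have ex: "\<exists>i. u < x i" by blast
      define i where "i = (LEAST i. u < x i)"
      have ui: "u < x i" unfolding i_def using ex by (rule LeastI_ex)
      have iN': "i \<le> N" unfolding i_def using \<open>u < x N\<close> by (intro Least_le)
      have i0: "i \<noteq> 0"
      proof
        assume "i = 0" then show False using ui x0 Suc.prems by simp
      qed
      have i: "i \<in> {1..N}" using iN' i0 by auto
      have ui1: "x (i - 1) \<le> u"
      proof -
        have "\<not> u < x (i - 1)" unfolding i_def by (rule not_less_Least) (use i0 i_def in auto)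
        then show ?thesis by simp
      qed
      have rp: "0 < r i" using rpos[OF i] .
      show ?thesis
      proof (cases "v \<le> x i")
        case True
        define u' where "u' = (u - x (i - 1)) / r i"
        define v' where "v' = (v - x (i - 1)) / r i"
        have u01: "u' \<in> {0..1}" unfolding u'_def using ui1 ui rp unfolding r_def by auto
        have v01: "v' \<in> {0..1}" unfolding v'_def using ui1 True Suc.prems rp unfolding r_def by auto
        have vu: "v' - u' = (v - u) / r i" unfolding u'_def v'_def using rp by (simp add: field_simps)
        have "0 < (v - u) / r i" using Suc.prems rp by simp
        then have uv': "u' < v'" using vu by linarith
        have "rmax ^ n * r i \<le> rmax ^ n * rmax" using rmax(2)[OF i] rmaxp unfolding r_def by simp
        also have "\<dots> \<le> v - u" using Suc.prems by (simp add: mult.commute)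
        finally have nn: "rmax ^ n \<le> v' - u'" unfolding vu using rp by (simp add: le_divide_eq)
        have IH: "\<bar>f u' - f v'\<bar> \<le> C * (v' - u') powr d" using Suc.IH[OF u01 v01 uv' nn] .
        have fu: "f u = a i * f u' + g i u'" using eq[OF i u01] rp unfolding u'_def r_def by simp
        have fv: "f v = a i * f v' + g i v'" using eq[OF i v01] rp unfolding v'_def r_def by simp
        have vup: "(v' - u') powr d = (v - u) powr d / r i powr d" unfolding vu using Suc.prems rp
          by (simp add: powr_divide)
        have "\<bar>f u - f v\<bar> \<le> \<bar>a i\<bar> * \<bar>f u' - f v'\<bar> + \<bar>g i u' - g i v'\<bar>"
          unfolding fu fv by (rule step_bound)
        also have "\<dots> \<le> (s * r i powr d) * (C * (v' - u') powr d) + K * (v' - u') powr d"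
          using a[OF i] IH g[OF i u01 v01] C0 uv' unfolding r_def
          by (intro add_mono mult_mono) (auto simp: abs_minus_commute)
        also have "\<dots> = s * C * (v - u) powr d + K * ((v - u) powr d / r i powr d)"
          unfolding vup using rpowpos[OF i] by simp
        also have "\<dots> \<le> s * C * (v - u) powr d + K / rmin * (v - u) powr d"
          using div_leM[OF i, of "v - u" K] K Suc.prems by simp
        also have "\<dots> = (s * C + K / rmin) * (v - u) powr d" by (simp add: algebra_simps)
        also have "\<dots> \<le> C * (v - u) powr d" using C2 by (intro mult_right_mono) auto
        finally show ?thesis .
      next
        case False2: False
        have iltN: "i < N" using False2 Suc.prems xN iN' by (cases "i = N") auto
        have i2: "i + 1 \<in> {1..N}" using iltN by auto
        have vi2: "v \<le> x (i + 1)"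
        proof (rule ccontr)
          assume "\<not> v \<le> x (i + 1)"
          then have "v - u \<ge> x (i + 1) - x i" using ui by simp
          moreover have "rmin \<le> x (i + 1) - x i" using rmin(2)[OF i2] by simp
          ultimately show False using False by simp
        qed
        have s1: "\<bar>f u - f (x i)\<bar> \<le> (E + K) / rmin * (x i - u) powr d"
          using side[OF i ui1] ui by simp
        have s2: "\<bar>f v - f (x i)\<bar> \<le> (E + K) / rmin * (v - x i) powr d"
          using side[OF i2, of v] False2 vi2 by simp
        have EK: "0 \<le> (E + K) / rmin" using E0 K rmin by simp
        have p1: "(x i - u) powr d \<le> (v - u) powr d" using ui False2 d by (intro powr_mono2) auto
        have p2: "(v - x i) powr d \<le> (v - u) powr d" using ui False2 d by (intro powr_mono2) auto
        have "\<bar>f u - f v\<bar> \<le> \<bar>f u - f (x i)\<bar> + \<bar>f v - f (x i)\<bar>" by linarith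
        also have "\<dots> \<le> (E + K) / rmin * (v - u) powr d + (E + K) / rmin * (v - u) powr d"
          using s1 s2 mult_left_mono[OF p1 EK] mult_left_mono[OF p2 EK] by linarith
        also have "\<dots> = 2 * ((E + K) / rmin) * (v - u) powr d" by simp
        also have "\<dots> \<le> C * (v - u) powr d" using C3 by (intro mult_right_mono) auto
        finally show ?thesis .
      qed
    qed
  qed
  have "\<bar>f u - f v\<bar> \<le> C * \<bar>u - v\<bar> powr d" if "u \<in> {0..1}" "v \<in> {0..1}" "u < v" for u v
  proof -
    obtain n where "rmax ^ n < v - u" using real_arch_pow_inv[of "v - u" rmax] rmax(1) \<open>u < v\<close> by auto
    moreover have "\<bar>u - v\<bar> = v - u" using \<open>u < v\<close> by simp
    ultimately show ?thesis using main[OF that, of n] by simp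
  qed
  note lt = this
  have "\<forall>u\<in>{0..1}. \<forall>v\<in>{0..1}. \<bar>f u - f v\<bar> \<le> C * \<bar>u - v\<bar> powr d"
  proof (intro ballI)
    fix u v :: real assume u: "u \<in> {0..1}" and v: "v \<in> {0..1}"
    consider "u < v" | "u = v" | "v < u" by linarith
    then show "\<bar>f u - f v\<bar> \<le> C * \<bar>u - v\<bar> powr d"
    proof cases
      case 1 then show ?thesis using lt u v by blast
    next
      case 2 then show ?thesis by simp
    next
      case 3 then show ?thesis using lt[OF v u] by (simp add: abs_minus_commute)
    qed
  qed
  then show ?thesis by blast
qed

theorem theorem3p1:
  fixes N :: nat and x :: "nat \<Rightarrow> real"
    and \<alpha> \<beta> \<gamma> lam_i mu_i :: "nat \<Rightarrow> real"
    and p q :: "nat \<Rightarrow> real \<Rightarrow> real"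
    and f1 f2 :: "real \<Rightarrow> real"
    and L :: "nat \<Rightarrow> real \<Rightarrow> real"
    and lam mu Omega Gamma Theta :: real
  assumes N: "N \<ge> 2"
    and x0: "x 0 = 0" and xN: "x N = 1"
    and xmono: "\<And>i. i \<in> {1..N} \<Longrightarrow> x (i - 1) < x i"
    and L_def: "\<And>i y. L i y = x (i - 1) + (x i - x (i - 1)) * y"
    and alpha: "\<And>i. i \<in> {1..N} \<Longrightarrow> \<bar>\<alpha> i\<bar> < 1"
    and betagamma: "\<And>i. i \<in> {1..N} \<Longrightarrow> \<bar>\<beta> i\<bar> + \<bar>\<gamma> i\<bar> < 1"
    and lam_bounds: "\<And>i. i \<in> {1..N} \<Longrightarrow> 0 < lam_i i \<and> lam_i i \<le> 1"
    and mu_bounds: "\<And>i. i \<in> {1..N} \<Longrightarrow> 0 < mu_i i \<and> mu_i i \<le> 1"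
    and p_lip: "\<And>i. i \<in> {1..N} \<Longrightarrow> Lip_on_I (lam_i i) (p i)"
    and q_lip: "\<And>i. i \<in> {1..N} \<Longrightarrow> Lip_on_I (mu_i i) (q i)"
    and f1_cont: "continuous_on {0..1} f1"
    and f2_cont: "continuous_on {0..1} f2"
    and eq1: "\<And>i y. i \<in> {1..N} \<Longrightarrow> y \<in> {0..1} \<Longrightarrow>
               f1 (L i y) = \<alpha> i * f1 y + \<beta> i * f2 y + p i y"
    and eq2: "\<And>i y. i \<in> {1..N} \<Longrightarrow> y \<in> {0..1} \<Longrightarrow>
               f2 (L i y) = \<gamma> i * f2 y + q i y"
    and lam_def: "lam = Min (lam_i ` {1..N})"
    and mu_def: "mu = Min (mu_i ` {1..N})"
    and Omega_def: "Omega = Max ((\<lambda>i. \<bar>\<alpha> i\<bar> / (x i - x (i - 1)) powr lam) ` {1..N})"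
    and Gamma_def: "Gamma = Max ((\<lambda>i. \<bar>\<gamma> i\<bar> / (x i - x (i - 1)) powr mu) ` {1..N})"
    and Theta_def: "Theta = Max ((\<lambda>i. \<bar>\<alpha> i\<bar> / (x i - x (i - 1)) powr mu) ` {1..N})"
    and Theta_lt1: "Theta < 1"
  shows "(Omega \<noteq> 1 \<and> Gamma \<noteq> 1 \<longrightarrow> (\<exists>\<delta>. 0 < \<delta> \<and> \<delta> \<le> 1 \<and> Lip_on_I \<delta> f1))
       \<and> (Omega = 1 \<or> Gamma = 1 \<longrightarrow> (\<exists>\<delta>. 0 < \<delta> \<and> \<delta> \<le> 1 \<and>
            modcont f1 \<in> O[at 0](\<lambda>t. \<bar>t\<bar> powr \<delta> * ln \<bar>t\<bar>)))"
proof -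
  define r where "r i = x i - x (i - 1)" for i
  have rpos: "0 < r i" if "i \<in> {1..N}" for i using xmono[OF that] unfolding r_def by simp
  have mono: "x i \<le> x j" if "i \<le> j" "j \<le> N" for i j
    using that
  proof (induction j)
    case 0 then show ?case by simp
  next
    case (Suc j)
    show ?case
    proof (cases "i = Suc j")
      case True then show ?thesis by simp
    next
      case False
      then have "x i \<le> x j" using Suc by simp
      moreover have "x j < x (Suc j)" using xmono[of "Suc j"] Suc by simp
      ultimately show ?thesis by simp
    qed
  qed
  have r1: "r i < 1" if i: "i \<in> {1..N}" for i
  proof (cases "i = 1")
    case True
    have "x 1 < x 2" using xmono[of 2] N by simp
    moreover have "x 2 \<le> x N" using mono[of 2 N] N by simp
    ultimately show ?thesis using True xN x0 unfolding r_def by simp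
  next
    case False
    have "x 0 < x 1" using xmono[of 1] N by simp
    moreover have "x 1 \<le> x (i - 1)"
    proof -
      have "1 \<le> i - 1" "i - 1 \<le> N" using i False by auto
      then show ?thesis using mono[of 1 "i - 1"] by simp
    qed
    moreover have "x i \<le> x N" using mono[of i N] i by simp
    ultimately show ?thesis using xN x0 unfolding r_def by simp
  qed
  have fin: "finite {1..N}" and ne: "{1..N} \<noteq> {}" using N by auto
  define rmin where "rmin = Min (r ` {1..N})"
  define rmax where "rmax = Max (r ` {1..N})"
  have rmin0: "0 < rmin" unfolding rmin_def using fin ne rpos by (subst Min_gr_iff) auto
  have rminle: "rmin \<le> x i - x (i - 1)" if "i \<in> {1..N}" for i
  proof -
    have "Min (r ` {1..N}) \<le> r i" using fin that by (intro Min_le) auto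
    then show ?thesis unfolding rmin_def r_def .
  qed
  have rmin1: "rmin < 1" using rminle[of 1] r1[of 1] N unfolding r_def by auto
  have rmax1: "rmax < 1" unfolding rmax_def using fin ne r1 by (subst Max_less_iff) auto
  have rmaxge: "x i - x (i - 1) \<le> rmax" if "i \<in> {1..N}" for i
  proof -
    have "r i \<le> Max (r ` {1..N})" using fin that by (intro Max_ge) auto
    then show ?thesis unfolding rmax_def r_def .
  qed
  have mu0: "0 < mu" unfolding mu_def using fin ne mu_bounds by (subst Min_gr_iff) auto
  have mule: "mu \<le> mu_i i" if "i \<in> {1..N}" for i unfolding mu_def using fin that by simp
  have mu1: "mu \<le> 1" using mule[of 1] mu_bounds[of 1] N by auto
  have lam0: "0 < lam" unfolding lam_def using fin ne lam_bounds by (subst Min_gr_iff) auto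
  have lamle: "lam \<le> lam_i i" if "i \<in> {1..N}" for i unfolding lam_def using fin that by simp
  have bnd2: "bounded (f2 ` {0..1})" by (intro compact_imp_bounded compact_continuous_image f2_cont) auto
  then obtain B2 where B2: "\<And>u. u \<in> {0..1} \<Longrightarrow> \<bar>f2 u\<bar> \<le> B2" unfolding bounded_iff by (auto simp del: atLeastAtMost_iff)
  have bnd1: "bounded (f1 ` {0..1})" by (intro compact_imp_bounded compact_continuous_image f1_cont) auto
  then obtain B1 where B1: "\<And>u. u \<in> {0..1} \<Longrightarrow> \<bar>f1 u\<bar> \<le> B1" unfolding bounded_iff by (auto simp del: atLeastAtMost_iff)
  have g1: "\<bar>\<gamma> i\<bar> < 1" if "i \<in> {1..N}" for i using betagamma[OF that] by linarith
  have "\<exists>d s. 0 < d \<and> d \<le> mu \<and> 0 \<le> s \<and> s < 1 \<and>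
           (\<forall>i\<in>{1..N}. \<forall>r. rmin \<le> r \<longrightarrow> \<bar>\<gamma> i\<bar> \<le> s * r powr d)"
    by (rule choose_delta[OF fin _ rmin0 rmin1 mu0]) (rule g1)
  then obtain d2 s2 where d2: "0 < d2" "d2 \<le> mu" "0 \<le> s2" "s2 < 1"
    and s2: "\<forall>i\<in>{1..N}. \<forall>r. rmin \<le> r \<longrightarrow> \<bar>\<gamma> i\<bar> \<le> s2 * r powr d2"
    by blast
  obtain Kq where Kq: "0 \<le> Kq" "\<forall>i\<in>{1..N}. \<forall>u\<in>{0..1}. \<forall>v\<in>{0..1}. \<bar>q i u - q i v\<bar> \<le> Kq * \<bar>u - v\<bar> powr d2"
  proof -
    have "\<exists>K\<ge>0. \<forall>u\<in>{0..1}. \<forall>v\<in>{0..1}. \<bar>q i u - q i v\<bar> \<le> K * \<bar>u - v\<bar> powr d2"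
      if i: "i \<in> {1..N}" for i
      using lip_mono[OF q_lip[OF i] d2(1)] d2 mule[OF i] by simp
    then show ?thesis using common_const[OF fin, of q d2] that by blast
  qed
  obtain C2 where C2: "\<forall>u\<in>{0..1}. \<forall>v\<in>{0..1}. \<bar>f2 u - f2 v\<bar> \<le> C2 * \<bar>u - v\<bar> powr d2"
    using holder_general[of N x rmin rmax d2 s2 \<gamma> Kq q f2 B2] N x0 xN rmin0 rminle rmax1 rmaxge d2
      s2 rminle Kq B2 eq2 L_def mu1 by auto
  have a1: "\<bar>\<alpha> i\<bar> < 1" if "i \<in> {1..N}" for i using alpha[OF that] .
  have md: "0 < min d2 lam" using d2 lam0 by simp
  have "\<exists>d s. 0 < d \<and> d \<le> min d2 lam \<and> 0 \<le> s \<and> s < 1 \<and>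
           (\<forall>i\<in>{1..N}. \<forall>r. rmin \<le> r \<longrightarrow> \<bar>\<alpha> i\<bar> \<le> s * r powr d)"
    by (rule choose_delta[OF fin _ rmin0 rmin1 md]) (rule a1)
  then obtain d s where d: "0 < d" "d \<le> min d2 lam" "0 \<le> s" "s < 1"
    and s: "\<forall>i\<in>{1..N}. \<forall>r. rmin \<le> r \<longrightarrow> \<bar>\<alpha> i\<bar> \<le> s * r powr d"
    by blast
  have dle1: "d \<le> 1" using d d2 mu1 by simp
  obtain Kp where Kp: "0 \<le> Kp" "\<forall>i\<in>{1..N}. \<forall>u\<in>{0..1}. \<forall>v\<in>{0..1}. \<bar>p i u - p i v\<bar> \<le> Kp * \<bar>u - v\<bar> powr d"
  proof -
    have "\<exists>K\<ge>0. \<forall>u\<in>{0..1}. \<forall>v\<in>{0..1}. \<bar>p i u - p i v\<bar> \<le> K * \<bar>u - v\<bar> powr d"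
      if i: "i \<in> {1..N}" for i
      using lip_mono[OF p_lip[OF i] d(1)] d lamle[OF i] by simp
    then show ?thesis using common_const[OF fin, of p d] that by blast
  qed
  define C2' where "C2' = max C2 0"
  have f2d: "\<bar>f2 u - f2 v\<bar> \<le> C2' * \<bar>u - v\<bar> powr d" if "u \<in> {0..1}" "v \<in> {0..1}" for u v
  proof -
    have h: "\<bar>u - v\<bar> \<le> 1" using that by auto
    have "\<bar>f2 u - f2 v\<bar> \<le> C2 * \<bar>u - v\<bar> powr d2" using C2 that by blast
    also have "\<dots> \<le> C2' * \<bar>u - v\<bar> powr d2" unfolding C2'_def by (intro mult_right_mono) auto
    also have "\<dots> \<le> C2' * \<bar>u - v\<bar> powr d" unfolding C2'_def
      using h d by (intro mult_left_mono powr_mono') auto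
    finally show ?thesis .
  qed
  define g where "g i y = \<beta> i * f2 y + p i y" for i y
  have gH: "\<bar>g i u - g i v\<bar> \<le> (C2' + Kp) * \<bar>u - v\<bar> powr d"
    if i: "i \<in> {1..N}" and uv: "u \<in> {0..1}" "v \<in> {0..1}" for i u v
  proof -
    have b1: "\<bar>\<beta> i\<bar> \<le> 1" using betagamma[OF i] by linarith
    have "g i u - g i v = \<beta> i * (f2 u - f2 v) + (p i u - p i v)" unfolding g_def by (simp add: algebra_simps)
    then have "\<bar>g i u - g i v\<bar> \<le> \<bar>\<beta> i\<bar> * \<bar>f2 u - f2 v\<bar> + \<bar>p i u - p i v\<bar>"
      by (metis abs_mult abs_triangle_ineq)
    also have "\<dots> \<le> 1 * (C2' * \<bar>u - v\<bar> powr d) + Kp * \<bar>u - v\<bar> powr d"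
      using b1 f2d[OF uv] Kp i uv by (intro add_mono mult_mono) auto
    finally show ?thesis by (simp add: algebra_simps)
  qed
  have K0: "0 \<le> C2' + Kp" unfolding C2'_def using Kp by simp
  obtain C1 where C1: "\<forall>u\<in>{0..1}. \<forall>v\<in>{0..1}. \<bar>f1 u - f1 v\<bar> \<le> C1 * \<bar>u - v\<bar> powr d"
    using holder_general[of N x rmin rmax d s \<alpha> "C2' + Kp" g f1 B1] N x0 xN rmin0 rminle rmax1 rmaxge d dle1
      s rminle K0 gH B1 eq1 L_def unfolding g_def by auto
  have lip: "Lip_on_I d f1" unfolding Lip_on_I_def using C1 by blast
  have bo: "modcont f1 \<in> O[at 0](\<lambda>t. \<bar>t\<bar> powr d * ln \<bar>t\<bar>)" by (rule holder_modcont[OF d(1) C1])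
  show ?thesis using lip bo d(1) dle1 by blast
qed

end
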